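(* For the link two-relaxation-times scheme described in the context, under acoustic scaling ($\lambda>0$ fixed as $\Delta x\to0$), the modified equation of the bulk finite difference scheme $p_2(z)m_1=0$ is, for $(t,x)\in\mathbb{R}_+\times\mathbb{R}^d$, \begin{align*} \partial_t\phi(t,x)&+\lambda\sum_{j=1}^W\epsilon_{2j}\sum_{|\mathfrak n|=1}c_{2j}^{\mathfrak n}\partial_x^{\mathfrak n}\phi(t,x)\\ &-\lambda\Delta x\Big(\frac1s-\frac12\Big)\Big(2\sum_{j=1}^W\epsilon_{2j+1}\sum_{|\mathfrak n|=2}\frac{c_{2j}^{\mathfrak n}}{\mathfrak n!}\partial_x^{\mathfrak n}-\Big(\sum_{j=1}^W\epsilon_{2j}\sum_{|\mathfrak n|=1}c_{2j}^{\mathfrak n}\partial_x^{\mathfrak n}\Big)^2\Big)\phi(t,x)=O(\Delta x^2). \end{align*} Moreover, for a local initialisation $w\in\mathbb{R}^q$ with $w_1=1$ and $w_{2j}=\epsilon_{2j}$ for $j\in\{1,\dots,W\}$, the modified equation of the unique initialisation scheme $m_1(\Delta t,x)=(Ew)_1m_1^\circ(x)$ is, for $x\in\mathbb{R}^d$, \begin{align*} \partial_t\phi(0,x)&+\lambda\sum_{j=1}^W\epsilon_{2j}\sum_{|\mathfrak n|=1}c_{2j}^{\mathfrak n}\partial_x^{\mathfrak n}\phi(0,x)\\ &-\frac{\lambda\Delta x}{2}\Big(2\sum_{j=1}^W\big((2-s)\epsilon_{2j+1}+(s-1)w_{2j+1}\big)\sum_{|\mathfrak n|=2}\frac{c_{2j}^{\mathfrak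 n}}{\mathfrak n!}\partial_x^{\mathfrak n}-\Big(\sum_{j=1}^W\epsilon_{2j}\sum_{|\mathfrak n|=1}c_{2j}^{\mathfrak n}\partial_x^{\mathfrak n}\Big)^2\Big)\phi(0,x)=O(\Delta x^2). \end{align*}
   Context: Let $d\ge1$, $W\in\mathbb{N}^*$, $q=1+2W$. Velocities $c_1=0$, $c_{2j}=-c_{2j+1}\in\mathbb{Z}^d$ for $j\in\{1,\dots,W\}$. Moment matrix $M$ with first row $(1,\dots,1)$ and, for each $j$, row $2j$ with entries $1,-1$ in columns $2j,2j+1$, row $2j+1$ with entries $1,1$ in columns $2j,2j+1$, zeros elsewhere. Relaxation parameters $s_{2j}=s\in(0,2]$, $s_{2j+1}=2-s$; equilibrium coefficients $\epsilon\in\mathbb{R}^q$, $\epsilon_1=1$, independent of $\Delta x$; $K=I-S(I-\epsilon e_1^T)$, $S=\mathrm{diag}(s_i)$. $\Delta t=\Delta x/\lambda$. Shifts $(x_\ell\phi)(x)=\phi(x-\Delta xe_\ell)$, $x^c=\prod x_\ell^{c_\ell}$; for a Laurent polynomial $\mathsf d$, $\mathsf S(\mathsf d)=(\mathsf d(x)+\mathsf d(x^{-1}))/2$, $\mathsf A(\mathsf d)=(\mathsf d(x)-\mathsf d(x^{-1}))/2$. $T=M\mathrm{diag}(x^{c_1},\dots,x^{c_q})M^{-1}$, $E=TK$. Time shift $(z\phi)(t)=\phi(t+\Delta t)$. Multi-index notation: $c^{\mathfrak n}=\prod c_\ell^{\mathfrak n_\ell}$, $\mathfrak n!=\prod\mathfrak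 n_\ell!$, $\partial_x^{\mathfrak n}=\prod\partial_{x_\ell}^{\mathfrak n_\ell}$. The bulk finite difference scheme on the conserved moment is $p_2(z)m_1=0$ with $p_2(z)=z^2+(s-2)z+(1-s)-zs\sum_{j}\mathsf A(x^{c_{2j}})\epsilon_{2j}+z(s-2)\sum_j(\mathsf S(x^{c_{2j}})-1)\epsilon_{2j+1}$. The initialisation is $m(0,x)=w\,m_1^\circ(x)$. Modified equations are obtained by substituting a smooth $\phi$ for the discrete unknowns in the scheme (for the initialisation scheme: $(z\phi)(0,x)=((Ew)_1\phi(0,\cdot))(x)$), Taylor-expanding in $\Delta x$, normalising so that $\partial_t$ has coefficient one, and eliminating higher-order time derivatives using the lower-order relations. *)

theory Defs
  imports "HOL-Analysis.Analysis" "HOL-Library.Landau_Symbols"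
begin

coinductive smooth_fun :: "('a::real_normed_vector \<Rightarrow> real) \<Rightarrow> bool" where
  "(\<forall>p. f differentiable (at p)) \<Longrightarrow>
   (\<forall>v. smooth_fun (\<lambda>p. frechet_derivative f (at p) v)) \<Longrightarrow> smooth_fun f"

definition pdt :: "(real \<times> (real^'d) \<Rightarrow> real) \<Rightarrow> real \<times> (real^'d) \<Rightarrow> real" where
  "pdt f = (\<lambda>p. frechet_derivative f (at p) (1, 0))"

definition pdx :: "'d::finite \<Rightarrow> (real \<times> (real^'d) \<Rightarrow> real) \<Rightarrow> real \<times> (real^'d) \<Rightarrow> real" where
  "pdx l f = (\<lambda>p. frechet_derivative f (at p) (0, axis l 1))"

definition multi :: "nat \<Rightarrow> ('d::finite \<Rightarrow> nat) set" where
  "multi k = {n. (\<Sum>l\<in>UNIV. n l) = k}"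

definition cpow :: "int^'d \<Rightarrow> ('d::finite \<Rightarrow> nat) \<Rightarrow> real" where
  "cpow c n = (\<Prod>l\<in>UNIV. (real_of_int (c $ l)) ^ (n l))"

definition nfact :: "('d::finite \<Rightarrow> nat) \<Rightarrow> real" where
  "nfact n = (\<Prod>l\<in>UNIV. fact (n l))"

text \<open>partial_x^n: apply pdx l exactly n l times for every l (order is irrelevant for
smooth functions).\<close>
definition pmulti :: "('d::finite \<Rightarrow> nat) \<Rightarrow> (real \<times> (real^'d) \<Rightarrow> real) \<Rightarrow> real \<times> (real^'d) \<Rightarrow> real" where
  "pmulti n f = foldr pdx (SOME xs. mset xs = (\<Sum>l\<in>UNIV. replicate_mset (n l) l)) f"

definition cr :: "int^'d \<Rightarrow> real^'d" where
  "cr c = (\<chi> l. real_of_int (c $ l))"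

text \<open>A(x^c) and S(x^c) acting in space on functions of (t,x); (x^c phi)(x) = phi(x - dx c).\<close>
definition Aop :: "real \<Rightarrow> int^'d \<Rightarrow> (real \<times> (real^'d) \<Rightarrow> real) \<Rightarrow> real \<times> (real^'d) \<Rightarrow> real" where
  "Aop dx c f = (\<lambda>(t,y). (f (t, y - dx *\<^sub>R cr c) - f (t, y + dx *\<^sub>R cr c)) / 2)"

definition Sop :: "real \<Rightarrow> int^'d \<Rightarrow> (real \<times> (real^'d) \<Rightarrow> real) \<Rightarrow> real \<times> (real^'d) \<Rightarrow> real" where
  "Sop dx c f = (\<lambda>(t,y). (f (t, y - dx *\<^sub>R cr c) + f (t, y + dx *\<^sub>R cr c)) / 2)"

definition p2_apply :: "real \<Rightarrow> nat \<Rightarrow> real \<Rightarrow> (nat \<Rightarrow> real) \<Rightarrow> (nat \<Rightarrow> int^'d) \<Rightarrow> real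
    \<Rightarrow> (real \<times> (real^'d) \<Rightarrow> real) \<Rightarrow> real \<times> (real^'d) \<Rightarrow> real" where
  "p2_apply lam W s eps c dx f = (\<lambda>(t,y). let dt = dx / lam in
      f (t + 2*dt, y) + (s - 2) * f (t + dt, y) + (1 - s) * f (t, y)
      - s * (\<Sum>j=1..W. eps (2*j) * Aop dx (c (2*j)) f (t + dt, y))
      + (s - 2) * (\<Sum>j=1..W. eps (2*j+1) * (Sop dx (c (2*j)) f (t + dt, y) - f (t + dt, y))))"

definition Mmat :: "nat \<Rightarrow> nat \<Rightarrow> nat \<Rightarrow> real" where
  "Mmat q i j = (if i \<in> {1..q} \<and> j \<in> {1..q} then
      (if i = 1 then 1
       else if even i then (if j = i then 1 else if j = i + 1 then -1 else 0)
       else (if j = i - 1 then 1 else if j = i then 1 else 0))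
     else 0)"

definition Minv :: "nat \<Rightarrow> nat \<Rightarrow> nat \<Rightarrow> real" where
  "Minv q = (SOME N. \<forall>i\<in>{1..q}. \<forall>j\<in>{1..q}.
      (\<Sum>k=1..q. Mmat q i k * N k j) = (if i = j then 1 else 0))"

definition svec :: "real \<Rightarrow> real \<Rightarrow> nat \<Rightarrow> real" where
  "svec s1 s i = (if i = 1 then s1 else if even i then s else 2 - s)"

definition Kmat :: "real \<Rightarrow> real \<Rightarrow> (nat \<Rightarrow> real) \<Rightarrow> nat \<Rightarrow> nat \<Rightarrow> real" where
  "Kmat s1 s eps i j = (if i = j then 1 else 0)
      - svec s1 s i * ((if i = j then 1 else 0) - eps i * (if j = 1 then 1 else 0))"

text \<open>((E w)_1 u)(y), E = T K, T = M diag(x^{c_1},...,x^{c_q}) M^{-1}.\<close>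
definition E1_apply :: "nat \<Rightarrow> real \<Rightarrow> real \<Rightarrow> (nat \<Rightarrow> real) \<Rightarrow> (nat \<Rightarrow> int^'d) \<Rightarrow> real
    \<Rightarrow> (nat \<Rightarrow> real) \<Rightarrow> (real^'d \<Rightarrow> real) \<Rightarrow> real^'d \<Rightarrow> real" where
  "E1_apply W s1 s eps c dx w u = (\<lambda>y. let q = 1 + 2*W in
      (\<Sum>k=1..q. Mmat q 1 k *
         (\<Sum>j=1..q. Minv q k j * (\<Sum>i=1..q. Kmat s1 s eps j i * w i)
                     * u (y - dx *\<^sub>R cr (c k)))))"

definition Aop1 :: "nat \<Rightarrow> (nat \<Rightarrow> real) \<Rightarrow> (nat \<Rightarrow> int^'d::finite)
    \<Rightarrow> (real \<times> (real^'d) \<Rightarrow> real) \<Rightarrow> real \<times> (real^'d) \<Rightarrow> real" where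
  "Aop1 W eps c f = (\<lambda>p. \<Sum>j=1..W. eps (2*j) *
      (\<Sum>n\<in>multi 1. cpow (c (2*j)) n * pmulti n f p))"

definition Bop2 :: "nat \<Rightarrow> (nat \<Rightarrow> real) \<Rightarrow> (nat \<Rightarrow> int^'d::finite)
    \<Rightarrow> (real \<times> (real^'d) \<Rightarrow> real) \<Rightarrow> real \<times> (real^'d) \<Rightarrow> real" where
  "Bop2 W gam c f = (\<lambda>p. \<Sum>j=1..W. gam j *
      (\<Sum>n\<in>multi 2. cpow (c (2*j)) n / nfact n * pmulti n f p))"

end

theory Submission
  imports Defs
begin

definition Dd :: "'a::real_normed_vector \<Rightarrow> ('a \<Rightarrow> real) \<Rightarrow> 'a \<Rightarrow> real" where
  "Dd v f = (\<lambda>p. frechet_derivative f (at p) v)"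

lemma smooth_differentiable: "smooth_fun f \<Longrightarrow> f differentiable (at p)"
  by (erule smooth_fun.cases) auto

lemma smooth_Dd: "smooth_fun f \<Longrightarrow> smooth_fun (Dd v f)"
  unfolding Dd_def by (erule smooth_fun.cases) auto

lemma smooth_hasder: "smooth_fun f \<Longrightarrow> (f has_derivative frechet_derivative f (at p)) (at p)"
  using smooth_differentiable frechet_derivative_works by blast

lemma smooth_lin: "smooth_fun f \<Longrightarrow> linear (frechet_derivative f (at p))"
  using smooth_hasder has_derivative_linear by blast

lemma Dd_add: "smooth_fun f \<Longrightarrow> Dd (u + v) f p = Dd u f p + Dd v f p"
  unfolding Dd_def using smooth_lin linear_add by blast

lemma Dd_scale: "smooth_fun f \<Longrightarrow> Dd (a *\<^sub>R u) f p = a * Dd u f p"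
  unfolding Dd_def using smooth_lin[of f p] by (simp add: linear_scale)

lemma Dd_neg: "smooth_fun f \<Longrightarrow> Dd (- u) f p = - Dd u f p"
  unfolding Dd_def using smooth_lin[of f p] by (simp add: linear_neg)

lemma Dd_diff: "smooth_fun f \<Longrightarrow> Dd (u - v) f p = Dd u f p - Dd v f p"
  unfolding Dd_def using smooth_lin[of f p] by (simp add: linear_diff)

lemma Dd_zero: "smooth_fun f \<Longrightarrow> Dd 0 f p = 0"
  unfolding Dd_def using smooth_lin[of f p] by (simp add: linear_0)

lemma Dd_sum: "smooth_fun f \<Longrightarrow> Dd (\<Sum>j\<in>A. u j) f p = (\<Sum>j\<in>A. Dd (u j) f p)"
  unfolding Dd_def using smooth_lin[of f p] by (simp add: linear_sum)

lemma line_deriv: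
  assumes "smooth_fun g"
  shows "((\<lambda>\<tau>. g (q + \<tau> *\<^sub>R w)) has_real_derivative Dd w g (q + \<tau> *\<^sub>R w)) (at \<tau>)"
proof -
  have h1: "(g has_derivative frechet_derivative g (at (q + \<tau> *\<^sub>R w))) (at (q + \<tau> *\<^sub>R w))"
    using smooth_hasder[OF assms] .
  have h2: "((\<lambda>\<tau>. q + \<tau> *\<^sub>R w) has_derivative (\<lambda>h. h *\<^sub>R w)) (at \<tau>)"
    by (auto intro!: derivative_eq_intros)
  have "((\<lambda>\<tau>. g (q + \<tau> *\<^sub>R w)) has_derivative (\<lambda>h. frechet_derivative g (at (q + \<tau> *\<^sub>R w)) (h *\<^sub>R w))) (at \<tau>)"
    using has_derivative_compose[OF h2 h1] by simp
  moreover have "(\<lambda>h. frechet_derivative g (at (q + \<tau> *\<^sub>R w)) (h *\<^sub>R w)) = (*) (Dd w g (q + \<tau> *\<^sub>R w))"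
    using smooth_lin[OF assms, of "q + \<tau> *\<^sub>R w"] by (auto simp: Dd_def linear_scale fun_eq_iff)
  ultimately show ?thesis by (simp add: has_field_derivative_def)
qed

lemma smooth_cont: "smooth_fun g \<Longrightarrow> continuous (at q) g"
  using smooth_differentiable differentiable_imp_continuous_within by blast


lemma smooth_Dpow: "smooth_fun f \<Longrightarrow> smooth_fun ((Dd v ^^ m) f)"
  by (induction m) (auto intro: smooth_Dd)

definition Rq :: "('a::real_normed_vector \<Rightarrow> real) \<Rightarrow> 'a \<Rightarrow> 'a \<Rightarrow> real \<Rightarrow> real" where
  "Rq f p v h = (f (p + h *\<^sub>R v) - f p - h * Dd v f p - h^2/2 * Dd v (Dd v f) p) / h"

lemma expand: "h \<noteq> 0 \<Longrightarrow> f (p + h *\<^sub>R v) = f p + h * Dd v f p + h^2/2 * Dd v (Dd v f) p + h * Rq f p v h"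
  unfolding Rq_def by (simp add: field_simps)

lemma taylor:
  assumes sm: "smooth_fun f"
  shows "Rq f p v \<in> O[at_right 0](\<lambda>h. h^2)"
proof -
  define g3 where "g3 = (Dd v ^^ 3) f"
  have cg: "isCont g3 q" for q unfolding g3_def by (rule smooth_cont[OF smooth_Dpow[OF sm]])
  have c1: "isCont (\<lambda>t. p + t *\<^sub>R v) t" for t :: real by (intro continuous_intros)
  have cg3: "continuous_on {0..1} (\<lambda>t. g3 (p + t *\<^sub>R v))"
    by (intro continuous_at_imp_continuous_on ballI isCont_o2[OF c1 cg])
  have "compact ((\<lambda>t. g3 (p + t *\<^sub>R v)) ` {0..1})"
    by (rule compact_continuous_image[OF cg3]) simp
  then obtain M where M': "\<forall>x\<in>(\<lambda>t. g3 (p + t *\<^sub>R v)) ` {0..1}. norm x \<le> M"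
    using compact_imp_bounded bounded_iff by blast
  have M: "\<And>t. t \<in> {0..1} \<Longrightarrow> norm (g3 (p + t *\<^sub>R v)) \<le> M" using M' by blast
  have M0: "0 \<le> M" using M[of 0] by (meson atLeastAtMost_iff norm_ge_zero order_trans zero_le_one order_refl)
  have ev: "\<forall>\<^sub>F h in at_right 0. (0::real) < h \<and> h < 1"
    using eventually_at_right_real[of 0 1] by (auto elim: eventually_mono)
  have "\<forall>\<^sub>F h in at_right 0. norm (Rq f p v h) \<le> (M/6 + 1) * norm (h^2)"
  proof (rule eventually_mono[OF ev])
    fix h :: real assume h: "0 < h \<and> h < 1"
    define diff where "diff = (\<lambda>m t. (Dd v ^^ m) f (p + t *\<^sub>R v))"
    have "\<exists>t. 0 < t \<and> t < h \<and> f (p + h *\<^sub>R v) = (\<Sum>m<3. diff m 0 / fact m * h ^ m) + diff 3 t / fact 3 * h ^ 3"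
    proof (rule Maclaurin[of h 3 diff "\<lambda>h. f (p + h *\<^sub>R v)"])
      show "0 < h" using h by simp
      show "diff 0 = (\<lambda>h. f (p + h *\<^sub>R v))" by (simp add: diff_def)
      show "\<forall>m t. m < 3 \<and> 0 \<le> t \<and> t \<le> h \<longrightarrow> DERIV (diff m) t :> diff (Suc m) t"
        unfolding diff_def using line_deriv[OF smooth_Dpow[OF sm]] by simp
    qed simp
    then obtain t where t: "0 < t" "t < h"
      and eq: "f (p + h *\<^sub>R v) = (\<Sum>m<3. diff m 0 / fact m * h ^ m) + diff 3 t / fact 3 * h ^ 3" by blast
    have eq2: "f (p + h *\<^sub>R v) = f p + h * Dd v f p + h^2/2 * Dd v (Dd v f) p + diff 3 t / 6 * h^3"
      using eq by (simp add: diff_def numeral_3_eq_3 eval_nat_numeral fact_numeral)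
    have Rqe: "Rq f p v h = diff 3 t / 6 * h^2"
      unfolding Rq_def eq2 using h by (simp add: field_simps power2_eq_square power3_eq_cube)
    have nd: "\<bar>diff 3 t\<bar> \<le> M" unfolding diff_def using M[of t] t h g3_def by simp
    have "norm (Rq f p v h) = \<bar>diff 3 t\<bar> / 6 * h^2" unfolding Rqe by (simp add: abs_mult)
    also have "\<dots> \<le> M/6 * h^2" using nd by (intro mult_right_mono divide_right_mono) auto
    also have "\<dots> \<le> (M/6 + 1) * h^2" by (intro mult_right_mono) auto
    also have "\<dots> = (M/6 + 1) * norm (h^2)" by simp
    finally show "norm (Rq f p v h) \<le> (M/6 + 1) * norm (h^2)" .
  qed
  then show ?thesis
    using M0 by (intro landau_o.bigI[of "M/6+1"]) auto
qed

lemma schwarz_mvt: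
  assumes sm: "smooth_fun f" and h: "0 < h"
  shows "\<exists>\<xi> \<eta>. 0 < \<xi> \<and> \<xi> < h \<and> 0 < \<eta> \<and> \<eta> < h \<and>
    (f (p + h *\<^sub>R u + h *\<^sub>R v) - f (p + h *\<^sub>R u) - f (p + h *\<^sub>R v) + f p) / h^2
      = Dd v (Dd u f) (p + \<xi> *\<^sub>R u + \<eta> *\<^sub>R v)"
proof -
  define \<phi> where "\<phi> = (\<lambda>\<tau>. f ((p + h *\<^sub>R v) + \<tau> *\<^sub>R u) - f (p + \<tau> *\<^sub>R u))"
  have d\<phi>: "DERIV \<phi> \<tau> :> Dd u f ((p + h *\<^sub>R v) + \<tau> *\<^sub>R u) - Dd u f (p + \<tau> *\<^sub>R u)" for \<tau>
    unfolding \<phi>_def by (intro DERIV_diff line_deriv sm)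
  obtain \<xi> where \<xi>: "0 < \<xi>" "\<xi> < h"
    and e1: "\<phi> h - \<phi> 0 = (h - 0) * (Dd u f ((p + h *\<^sub>R v) + \<xi> *\<^sub>R u) - Dd u f (p + \<xi> *\<^sub>R u))"
    using MVT2[OF h d\<phi>] by blast
  define \<psi> where "\<psi> = (\<lambda>\<sigma>. Dd u f ((p + \<xi> *\<^sub>R u) + \<sigma> *\<^sub>R v))"
  have d\<psi>: "DERIV \<psi> \<sigma> :> Dd v (Dd u f) ((p + \<xi> *\<^sub>R u) + \<sigma> *\<^sub>R v)" for \<sigma>
    unfolding \<psi>_def by (intro line_deriv smooth_Dd sm)
  obtain \<eta> where \<eta>: "0 < \<eta>" "\<eta> < h"
    and e2: "\<psi> h - \<psi> 0 = (h - 0) * Dd v (Dd u f) ((p + \<xi> *\<^sub>R u) + \<eta> *\<^sub>R v)"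
    using MVT2[OF h d\<psi>] by blast
  have "f (p + h *\<^sub>R u + h *\<^sub>R v) - f (p + h *\<^sub>R u) - f (p + h *\<^sub>R v) + f p = \<phi> h - \<phi> 0"
    unfolding \<phi>_def by (simp add: algebra_simps)
  also have "\<dots> = h * (\<psi> h - \<psi> 0)"
    using e1 unfolding \<psi>_def by (simp add: algebra_simps)
  also have "\<dots> = h^2 * Dd v (Dd u f) (p + \<xi> *\<^sub>R u + \<eta> *\<^sub>R v)"
    using e2 by (simp add: power2_eq_square)
  finally show ?thesis using \<xi> \<eta> h by (intro exI[of _ \<xi>] exI[of _ \<eta>]) simp
qed

lemma schwarz_lim:
  assumes sm: "smooth_fun f"
  shows "((\<lambda>h. (f (p + h *\<^sub>R u + h *\<^sub>R v) - f (p + h *\<^sub>R u) - f (p + h *\<^sub>R v) + f p) / h^2)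
          \<longlongrightarrow> Dd v (Dd u f) p) (at_right 0)"
proof (rule tendstoI)
  fix e :: real assume e: "0 < e"
  have "isCont (Dd v (Dd u f)) p" by (intro smooth_cont smooth_Dd sm)
  then obtain d where d: "0 < d" and dd: "\<And>x. dist x p < d \<Longrightarrow> dist (Dd v (Dd u f) x) (Dd v (Dd u f) p) < e"
    using e unfolding continuous_at_eps_delta by blast
  define K where "K = norm u + norm v + 1"
  have K: "0 < K" unfolding K_def by (simp add: add_nonneg_pos)
  have ev: "\<forall>\<^sub>F h in at_right 0. h \<in> {0<..<d/K}"
    using eventually_at_right_real[of 0 "d/K"] d K by simp
  show "\<forall>\<^sub>F h in at_right 0. dist ((f (p + h *\<^sub>R u + h *\<^sub>R v) - f (p + h *\<^sub>R u) - f (p + h *\<^sub>R v) + f p) / h^2) (Dd v (Dd u f) p) < e"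
  proof (rule eventually_mono[OF ev])
    fix h :: real assume h: "h \<in> {0<..<d/K}"
    obtain \<xi> \<eta> where xe: "0 < \<xi>" "\<xi> < h" "0 < \<eta>" "\<eta> < h"
      and eq: "(f (p + h *\<^sub>R u + h *\<^sub>R v) - f (p + h *\<^sub>R u) - f (p + h *\<^sub>R v) + f p) / h^2
      = Dd v (Dd u f) (p + \<xi> *\<^sub>R u + \<eta> *\<^sub>R v)"
      using schwarz_mvt[OF sm, of h p u v] h by auto
    have "dist (p + \<xi> *\<^sub>R u + \<eta> *\<^sub>R v) p = norm (\<xi> *\<^sub>R u + \<eta> *\<^sub>R v)"
      by (simp add: dist_norm)
    also have "\<dots> \<le> \<xi> * norm u + \<eta> * norm v"
      using xe by (metis (no_types, lifting) abs_of_pos norm_scaleR norm_triangle_ineq)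
    also have "\<dots> \<le> h * norm u + h * norm v"
      using xe by (intro add_mono mult_right_mono) auto
    also have "\<dots> < h * K" unfolding K_def using h by (simp add: algebra_simps)
    also have "\<dots> < d" using h K by (simp add: pos_less_divide_eq mult.commute)
    finally show "dist ((f (p + h *\<^sub>R u + h *\<^sub>R v) - f (p + h *\<^sub>R u) - f (p + h *\<^sub>R v) + f p) / h^2) (Dd v (Dd u f) p) < e"
      unfolding eq by (rule dd)
  qed
qed

lemma schwarz:
  assumes sm: "smooth_fun f"
  shows "Dd u (Dd v f) p = Dd v (Dd u f) p"
proof -
  have "((\<lambda>h. (f (p + h *\<^sub>R u + h *\<^sub>R v) - f (p + h *\<^sub>R u) - f (p + h *\<^sub>R v) + f p) / h^2)
          \<longlongrightarrow> Dd u (Dd v f) p) (at_right 0)"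
    using schwarz_lim[OF sm, of p v u] by (simp add: algebra_simps)
  from tendsto_unique[OF _ this schwarz_lim[OF sm, of p u v]] show ?thesis by simp
qed

definition dl :: "'d::finite \<Rightarrow> 'd \<Rightarrow> nat" where "dl l = (\<lambda>m. if m = l then 1 else 0)"
definition ev :: "'d::finite \<Rightarrow> real \<times> (real^'d)" where "ev l = (0, axis l 1)"

lemma pdx_Dd: "pdx l = Dd (ev l)" unfolding pdx_def Dd_def ev_def by simp
lemma pdt_Dd: "pdt = Dd (1, 0)" unfolding pdt_def Dd_def by simp

lemma sum_dl: "(\<Sum>k\<in>UNIV. dl l k) = 1" unfolding dl_def by (subst sum.delta) simp_all

lemma multi1: "multi 1 = range (dl :: 'd::finite \<Rightarrow> _)"
proof
  show "range dl \<subseteq> (multi 1 :: ('d \<Rightarrow> nat) set)" unfolding multi_def using sum_dl by auto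
next
  show "multi 1 \<subseteq> range (dl :: 'd \<Rightarrow> _)"
  proof
    fix n :: "'d \<Rightarrow> nat" assume "n \<in> multi 1"
    then have s: "(\<Sum>k\<in>UNIV. n k) = 1" unfolding multi_def by simp
    then obtain l where l: "n l \<noteq> 0" by (metis sum.neutral zero_neq_one)
    have "(\<Sum>k\<in>UNIV. n k) = n l + (\<Sum>k\<in>UNIV - {l}. n k)" by (simp add: sum.remove)
    with s have "n l + (\<Sum>k\<in>UNIV - {l}. n k) = 1" by simp
    with l have nl: "n l = 1" and r: "(\<Sum>k\<in>UNIV - {l}. n k) = 0" by arith+
    from r have "\<forall>k\<in>UNIV - {l}. n k = 0" by simp
    with nl have "n = dl l" unfolding dl_def by (auto simp: fun_eq_iff)
    then show "n \<in> range dl" by simp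
  qed
qed

lemma inj_dl: "inj dl"
  unfolding inj_def dl_def fun_eq_iff by (metis one_neq_zero)

lemma repl_dl: "(\<Sum>k\<in>UNIV. replicate_mset (dl l k) k) = {#l#}"
proof -
  have "(\<Sum>k\<in>UNIV. replicate_mset (dl l k) k) = (\<Sum>k\<in>UNIV. if k = l then {#k#} else {#})"
    unfolding dl_def by (intro sum.cong) auto
  then show ?thesis by (subst (asm) sum.delta) simp_all
qed

lemma mset_single: "mset xs = {#l#} \<Longrightarrow> xs = [l]"
  by (cases xs) auto

lemma mset_two: "mset xs = {#l, m#} \<Longrightarrow> xs = [l, m] \<or> xs = [m, l]"
proof -
  assume a: "mset xs = {#l, m#}"
  then have "length xs = 2" by (metis size_mset size_add_mset size_empty One_nat_def numeral_2_eq_2)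
  then obtain x y where xy: "xs = [x, y]"
    by (metis (no_types, lifting) One_nat_def Suc_1 length_0_conv length_Suc_conv)
  with a have "{#x, y#} = {#l, m#}" by simp
  then have "(x = l \<and> y = m) \<or> (x = m \<and> y = l)"
    by (metis add_eq_conv_ex add_mset_eq_single)
  with xy show ?thesis by auto
qed

lemma pmulti1: "pmulti (dl l) g = pdx l g"
proof -
  have "mset [l] = (\<Sum>k\<in>UNIV. replicate_mset (dl l k) k)" by (simp add: repl_dl)
  then have "mset (SOME xs. mset xs = (\<Sum>k\<in>UNIV. replicate_mset (dl l k) k)) = {#l#}"
    by (metis (mono_tags, lifting) someI_ex repl_dl)
  then have "(SOME xs. mset xs = (\<Sum>k\<in>UNIV. replicate_mset (dl l k) k)) = [l]"
    by (rule mset_single)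
  then show ?thesis unfolding pmulti_def by simp
qed

lemma cpow1: "cpow c (dl l) = real_of_int (c $ l)"
proof -
  have "cpow c (dl l) = (\<Prod>k\<in>UNIV. if k = l then real_of_int (c $ k) else 1)"
    unfolding cpow_def dl_def by (intro prod.cong) auto
  then show ?thesis by simp
qed

lemma sum_axis_real: "(\<Sum>l\<in>UNIV. x $ l *\<^sub>R ev l) = (0, x)"
proof -
  have "fst (\<Sum>l\<in>UNIV. x $ l *\<^sub>R ev l) = 0" by (simp add: fst_sum ev_def)
  moreover have "snd (\<Sum>l\<in>UNIV. x $ l *\<^sub>R ev l) = x"
    by (simp add: snd_sum ev_def vec_eq_iff sum_component axis_def if_distrib cong: if_cong)
  ultimately show ?thesis by (metis prod.collapse)
qed

lemma cr_expand: "(0, cr c) = (\<Sum>l\<in>UNIV. real_of_int (c $ l) *\<^sub>R ev l)"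
  using sum_axis_real[of "cr c"] by (simp add: cr_def)

lemma multi1_sum:
  assumes sm: "smooth_fun g"
  shows "(\<Sum>n\<in>multi 1. cpow c n * pmulti n g p) = Dd (0, cr c) g p"
proof -
  have "(\<Sum>n\<in>multi 1. cpow c n * pmulti n g p) = (\<Sum>l\<in>UNIV. cpow c (dl l) * pmulti (dl l) g p)"
    unfolding multi1 by (simp add: sum.reindex[OF inj_dl])
  also have "\<dots> = (\<Sum>l\<in>UNIV. real_of_int (c $ l) * Dd (ev l) g p)"
    by (simp add: cpow1 pmulti1 pdx_Dd)
  also have "\<dots> = Dd (0, cr c) g p"
    unfolding cr_expand by (simp add: Dd_sum[OF sm] Dd_scale[OF sm])
  finally show ?thesis .
qed

definition dd :: "'d::finite \<Rightarrow> 'd \<Rightarrow> 'd \<Rightarrow> nat" where "dd l m = (\<lambda>k. dl l k + dl m k)"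

lemma multi2: "multi 2 = (\<lambda>(l,m). dd l m) ` (UNIV :: ('d::finite \<times> 'd) set)"
proof
  show "(\<lambda>(l,m). dd l m) ` (UNIV :: ('d \<times> 'd) set) \<subseteq> multi 2"
    unfolding multi_def dd_def by (auto simp: sum.distrib sum_dl)
next
  show "multi 2 \<subseteq> (\<lambda>(l,m). dd l m) ` (UNIV :: ('d \<times> 'd) set)"
  proof
    fix n :: "'d \<Rightarrow> nat" assume "n \<in> multi 2"
    then have s: "(\<Sum>k\<in>UNIV. n k) = 2" unfolding multi_def by simp
    then obtain l where l: "n l \<noteq> 0" by (metis sum.neutral zero_neq_numeral)
    have le: "\<And>k. k \<in> UNIV \<Longrightarrow> dl l k \<le> n k" using l unfolding dl_def by auto
    define n' where "n' = (\<lambda>k. n k - dl l k)"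
    have "(\<Sum>k\<in>UNIV. n' k) = (\<Sum>k\<in>UNIV. n k) - (\<Sum>k\<in>UNIV. dl l k)"
      unfolding n'_def by (rule sum_subtractf_nat[OF le])
    then have "n' \<in> multi 1" unfolding multi_def using s sum_dl[of l] by simp
    then obtain m where m: "n' = dl m" using multi1 by blast
    have "n = dd l m" unfolding dd_def fun_eq_iff
    proof
      fix k show "n k = dl l k + dl m k" using le m unfolding n'_def fun_eq_iff by (metis UNIV_I le_add_diff_inverse)
    qed
    then show "n \<in> (\<lambda>(l,m). dd l m) ` UNIV" by auto
  qed
qed

lemma replicate_mset_plus': "replicate_mset (a + b) x = replicate_mset a x + replicate_mset b x"
  by (induct a) auto

lemma repl_dd: "(\<Sum>k\<in>UNIV. replicate_mset (dd l m k) k) = {#l, m#}"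
  unfolding dd_def by (simp add: replicate_mset_plus' sum.distrib repl_dl)

lemma pmulti2: "pmulti (dd l m) g = pdx l (pdx m g) \<or> pmulti (dd l m) g = pdx m (pdx l g)"
proof -
  have "mset [l, m] = (\<Sum>k\<in>UNIV. replicate_mset (dd l m k) k)" by (simp add: repl_dd)
  then have "mset (SOME xs. mset xs = (\<Sum>k\<in>UNIV. replicate_mset (dd l m k) k)) = {#l, m#}"
    by (metis (mono_tags, lifting) someI_ex repl_dd)
  then have "(SOME xs. mset xs = (\<Sum>k\<in>UNIV. replicate_mset (dd l m k) k)) = [l, m] \<or>
             (SOME xs. mset xs = (\<Sum>k\<in>UNIV. replicate_mset (dd l m k) k)) = [m, l]"
    by (rule mset_two)
  then show ?thesis unfolding pmulti_def by auto
qed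

lemma cpow2: "cpow c (dd l m) = real_of_int (c $ l) * real_of_int (c $ m)"
proof -
  have "cpow c (dd l m) = cpow c (dl l) * cpow c (dl m)"
    unfolding cpow_def dd_def by (simp add: power_add prod.distrib)
  then show ?thesis by (simp add: cpow1)
qed

lemma nfact2: "nfact (dd l m) = (if l = m then 2 else 1)"
proof (cases "l = m")
  case True
  have "nfact (dd l m) = (\<Prod>k\<in>UNIV. if k = l then 2 else 1)"
    unfolding nfact_def dd_def dl_def using True by (intro prod.cong) auto
  then show ?thesis using True by (subst (asm) prod.delta) simp_all
next
  case False
  have "nfact (dd l m) = 1"
    unfolding nfact_def dd_def dl_def using False by (intro prod.neutral) auto
  then show ?thesis using False by simp
qed

lemma fiber2: "card {x \<in> UNIV. (\<lambda>(a,b). dd a b) x = dd l m} = (if l = m then 1 else 2)"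
proof -
  have key: "dd a b = dd l m \<longleftrightarrow> (a = l \<and> b = m) \<or> (a = m \<and> b = l)" for a b
  proof
    assume e: "dd a b = dd l m"
    have "{#a, b#} = {#l, m#}" using repl_dd[of a b] repl_dd[of l m] e by simp
    then show "(a = l \<and> b = m) \<or> (a = m \<and> b = l)"
      by (metis add_eq_conv_ex add_mset_eq_single)
  next
    assume "(a = l \<and> b = m) \<or> (a = m \<and> b = l)"
    then show "dd a b = dd l m" unfolding dd_def by (auto simp: fun_eq_iff)
  qed
  have "{x \<in> UNIV. (\<lambda>(a,b). dd a b) x = dd l m} = {(l,m), (m,l)}"
    using key by auto
  then show ?thesis by auto
qed

lemma sum_image_fiber:
  assumes "finite S"
  shows "(\<Sum>y\<in>h ` S. G y) = (\<Sum>x\<in>S. G (h x) / real (card {x' \<in> S. h x' = h x}))"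
proof -
  have "(\<Sum>x\<in>S. G (h x) / real (card {x' \<in> S. h x' = h x}))
     = (\<Sum>y\<in>h ` S. \<Sum>x\<in>{x \<in> S. h x = y}. G (h x) / real (card {x' \<in> S. h x' = h x}))"
    by (rule sum.image_gen[OF assms])
  also have "\<dots> = (\<Sum>y\<in>h ` S. \<Sum>x\<in>{x \<in> S. h x = y}. G y / real (card {x' \<in> S. h x' = y}))"
    by (intro sum.cong) auto
  also have "\<dots> = (\<Sum>y\<in>h ` S. G y)"
  proof (intro sum.cong refl)
    fix y assume y: "y \<in> h ` S"
    then have "card {x' \<in> S. h x' = y} \<noteq> 0" using assms by (auto simp: card_eq_0_iff)
    then show "(\<Sum>x\<in>{x \<in> S. h x = y}. G y / real (card {x' \<in> S. h x' = y})) = G y" by simp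
  qed
  finally show ?thesis by simp
qed

lemma multi2_sum:
  assumes sm: "smooth_fun g"
  shows "(\<Sum>n\<in>multi 2. cpow c n / nfact n * pmulti n g p) = 1/2 * Dd (0, cr c) (Dd (0, cr c) g) p"
proof -
  let ?c = "\<lambda>l. real_of_int (c $ l)"
  let ?B = "\<lambda>l m. Dd (ev l) (Dd (ev m) g) p"
  have "(\<Sum>n\<in>multi 2. cpow c n / nfact n * pmulti n g p)
      = (\<Sum>x\<in>UNIV. (\<lambda>n. cpow c n / nfact n * pmulti n g p) ((\<lambda>(l,m). dd l m) x) / real (card {x' \<in> UNIV. (\<lambda>(l,m). dd l m) x' = (\<lambda>(l,m). dd l m) x}))"
    unfolding multi2 by (rule sum_image_fiber) simp
  also have "\<dots> = (\<Sum>x\<in>UNIV. (\<lambda>(l,m). ?c l * ?c m / 2 * ?B l m) x)"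
  proof (intro sum.cong refl)
    fix x :: "'a \<times> 'a" obtain l m where x: "x = (l, m)" by (cases x)
    have pm: "pmulti (dd l m) g p = ?B l m"
      using pmulti2[of l m g] schwarz[OF sm, of "ev l" "ev m" p] by (auto simp: pdx_Dd)
    show "(\<lambda>n. cpow c n / nfact n * pmulti n g p) ((\<lambda>(l,m). dd l m) x) / real (card {x' \<in> UNIV. (\<lambda>(l,m). dd l m) x' = (\<lambda>(l,m). dd l m) x})
        = (\<lambda>(l,m). ?c l * ?c m / 2 * ?B l m) x"
      unfolding x using fiber2[of l m] by (simp add: pm cpow2 nfact2)
  qed
  also have "\<dots> = (\<Sum>l\<in>UNIV. \<Sum>m\<in>UNIV. ?c l * ?c m / 2 * ?B l m)"
    by (simp only: UNIV_Times_UNIV[symmetric] sum.cartesian_product)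
  also have "\<dots> = 1/2 * (\<Sum>l\<in>UNIV. \<Sum>m\<in>UNIV. ?c l * ?c m * ?B l m)"
    unfolding sum_distrib_left by (intro sum.cong refl) simp
  also have "(\<Sum>l\<in>UNIV. \<Sum>m\<in>UNIV. ?c l * ?c m * ?B l m) = Dd (0, cr c) (Dd (0, cr c) g) p"
  proof -
    have "Dd (0, cr c) (Dd (0, cr c) g) p = (\<Sum>l\<in>UNIV. ?c l * Dd (ev l) (Dd (0, cr c) g) p)"
      unfolding cr_expand[of c] by (simp add: Dd_sum[OF smooth_Dd[OF sm]] Dd_scale[OF smooth_Dd[OF sm]])
    also have "\<dots> = (\<Sum>l\<in>UNIV. ?c l * Dd (0, cr c) (Dd (ev l) g) p)"
    proof (rule sum.cong[OF refl])
      fix l show "?c l * Dd (ev l) (Dd (0, cr c) g) p = ?c l * Dd (0, cr c) (Dd (ev l) g) p"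
        using schwarz[OF sm, of "ev l" "(0, cr c)" p] by simp
    qed
    also have "\<dots> = (\<Sum>l\<in>UNIV. ?c l * (\<Sum>m\<in>UNIV. ?c m * ?B m l))"
      unfolding cr_expand[of c] by (simp add: Dd_sum[OF smooth_Dd[OF sm]] Dd_scale[OF smooth_Dd[OF sm]])
    also have "\<dots> = (\<Sum>l\<in>UNIV. \<Sum>m\<in>UNIV. ?c l * ?c m * ?B l m)"
      unfolding sum_distrib_left
    proof (intro sum.cong refl)
      fix l m show "?c l * (?c m * ?B m l) = ?c l * ?c m * ?B l m"
        using schwarz[OF sm, of "ev m" "ev l" p] by simp
    qed
    finally show ?thesis by simp
  qed
  finally show ?thesis .
qed

lemma split_sum: "(\<Sum>k=1..1+2*(W::nat). g k) = g 1 + (\<Sum>m=1..W. g (2*m) + g (2*m+1))"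
proof (induction W)
  case 0 then show ?case by simp
next
  case (Suc W)
  have e: "1 + 2 * Suc W = Suc (Suc (1 + 2*W))" by simp
  show ?case unfolding e using Suc by (simp add: sum.distrib add_ac)
qed

lemma row_lemma:
  assumes i: "i \<in> {1..1+2*W}"
  shows "(\<Sum>k=1..1+2*W. Mmat (1+2*W) i k * z k) =
    (if i = 1 then z 1 + (\<Sum>m=1..W. z (2*m) + z (2*m+1))
     else if even i then z i - z (i+1) else z (i-1) + z i)"
proof -
  let ?q = "1+2*W"
  have "(\<Sum>k=1..?q. Mmat ?q i k * z k) = Mmat ?q i 1 * z 1 + (\<Sum>m=1..W. Mmat ?q i (2*m) * z (2*m) + Mmat ?q i (2*m+1) * z (2*m+1))"
    by (rule split_sum)
  also have "\<dots> = (if i = 1 then z 1 + (\<Sum>m=1..W. z (2*m) + z (2*m+1))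
     else if even i then z i - z (i+1) else z (i-1) + z i)"
  proof (cases "i = 1")
    case True
    have m1: "\<And>k. k \<in> {1..?q} \<Longrightarrow> Mmat ?q 1 k = 1" by (simp add: Mmat_def)
    have "(\<Sum>m=1..W. Mmat ?q i (2*m) * z (2*m) + Mmat ?q i (2*m+1) * z (2*m+1)) = (\<Sum>m=1..W. z (2*m) + z (2*m+1))"
    proof (intro sum.cong refl)
      fix m assume "m \<in> {1..W}"
      then show "Mmat ?q i (2*m) * z (2*m) + Mmat ?q i (2*m+1) * z (2*m+1) = z (2*m) + z (2*m+1)"
        using True m1[of "2*m"] m1[of "2*m+1"] by simp
    qed
    then show ?thesis using True m1[of 1] by simp
  next
    case False
    show ?thesis
    proof (cases "even i")
      case True
      then obtain n where n: "i = 2*n" by (auto elim: evenE)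
      with i False have n1: "n \<in> {1..W}" by auto
      have "(\<Sum>m=1..W. Mmat ?q i (2*m) * z (2*m) + Mmat ?q i (2*m+1) * z (2*m+1))
          = (\<Sum>m=1..W. if m = n then z (2*n) - z (2*n+1) else 0)"
        by (intro sum.cong refl) (auto simp: Mmat_def n)
      also have "\<dots> = z (2*n) - z (2*n+1)" using n1 by (subst sum.delta) simp_all
      finally show ?thesis using False True n by (simp add: Mmat_def)
    next
      case odd: False
      then obtain n where n: "i = 2*n+1" by (auto elim: oddE)
      with i False have n1: "n \<in> {1..W}" by auto
      then have n0: "n \<noteq> 0" by simp
      have "(\<Sum>m=1..W. Mmat ?q i (2*m) * z (2*m) + Mmat ?q i (2*m+1) * z (2*m+1))
          = (\<Sum>m=1..W. if m = n then z (2*n) + z (2*n+1) else 0)"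
        by (intro sum.cong refl) (auto simp: Mmat_def n n0)
      also have "\<dots> = z (2*n) + z (2*n+1)" using n1 by (subst sum.delta) simp_all
      finally show ?thesis using False odd n by (simp add: Mmat_def)
    qed
  qed
  finally show ?thesis .
qed


definition zsol :: "nat \<Rightarrow> (nat \<Rightarrow> real) \<Rightarrow> nat \<Rightarrow> real" where
  "zsol W v k = (if k = 1 then v 1 - (\<Sum>m=1..W. v (2*m+1))
     else if even k then (v k + v (k+1))/2 else (v k - v (k-1))/2)"

lemma zsol_ok:
  assumes i: "i \<in> {1..1+2*W}"
  shows "(\<Sum>k=1..1+2*W. Mmat (1+2*W) i k * zsol W v k) = v i"
proof -
  have r: "(\<Sum>k=1..1+2*W. Mmat (1+2*W) i k * zsol W v k) =
    (if i = 1 then zsol W v 1 + (\<Sum>m=1..W. zsol W v (2*m) + zsol W v (2*m+1))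
     else if even i then zsol W v i - zsol W v (i+1) else zsol W v (i-1) + zsol W v i)"
    by (rule row_lemma[OF i])
  show ?thesis
  proof (cases "i = 1")
    case True
    have "(\<Sum>m=1..W. zsol W v (2*m) + zsol W v (2*m+1)) = (\<Sum>m=1..W. v (2*m+1))"
    proof (intro sum.cong refl)
      fix m assume m: "m \<in> {1..W}"
      then have "zsol W v (2*m) = (v (2*m) + v (2*m+1))/2" "zsol W v (2*m+1) = (v (2*m+1) - v (2*m))/2"
        unfolding zsol_def by auto
      then show "zsol W v (2*m) + zsol W v (2*m+1) = v (2*m+1)" by simp
    qed
    then show ?thesis using r True by (simp add: zsol_def)
  next
    case False
    with i have i2: "i \<ge> 2" by auto
    show ?thesis
    proof (cases "even i")
      case True
      have "zsol W v i = (v i + v (i+1))/2" using True i2 unfolding zsol_def by auto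
      moreover have "zsol W v (i+1) = (v (i+1) - v i)/2" using True i2 unfolding zsol_def by auto
      ultimately show ?thesis using r False True by simp
    next
      case odd: False
      then have i3: "i \<ge> 3" using i2 by presburger
      have "zsol W v (i-1) = (v (i-1) + v i)/2" using odd i3 unfolding zsol_def by (auto simp: Suc_diff_le)
      moreover have "zsol W v i = (v i - v (i-1))/2" using odd i3 unfolding zsol_def by auto
      ultimately show ?thesis using r False odd by simp
    qed
  qed
qed

lemma Minv_prop:
  assumes "i \<in> {1..1+2*W}" "j \<in> {1..1+2*W}"
  shows "(\<Sum>k=1..1+2*W. Mmat (1+2*W) i k * Minv (1+2*W) k j) = (if i = j then 1 else 0)"
proof -
  let ?q = "1+2*W"
  have ex: "\<exists>N. \<forall>i\<in>{1..?q}. \<forall>j\<in>{1..?q}. (\<Sum>k=1..?q. Mmat ?q i k * N k j) = (if i = j then 1 else 0)"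
  proof (rule exI[of _ "\<lambda>k j. zsol W (\<lambda>i. if i = j then 1 else 0) k"], intro ballI)
    fix i j assume i: "i \<in> {1..?q}" and j: "j \<in> {1..?q}"
    show "(\<Sum>k=1..?q. Mmat ?q i k * zsol W (\<lambda>i. if i = j then 1 else 0) k) = (if i = j then 1 else 0)"
      by (rule zsol_ok[OF i, of "\<lambda>i. if i = j then 1 else 0"])
  qed
  show ?thesis using someI_ex[OF ex] assms unfolding Minv_def by blast
qed

lemma Mz:
  assumes i: "i \<in> {1..1+2*W}"
  shows "(\<Sum>k=1..1+2*W. Mmat (1+2*W) i k * (\<Sum>j=1..1+2*W. Minv (1+2*W) k j * v j)) = v i"
proof -
  let ?q = "1+2*W"
  have "(\<Sum>k=1..?q. Mmat ?q i k * (\<Sum>j=1..?q. Minv ?q k j * v j))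
      = (\<Sum>j=1..?q. (\<Sum>k=1..?q. Mmat ?q i k * Minv ?q k j) * v j)"
    unfolding sum_distrib_left by (subst sum.swap) (simp only: sum_distrib_right mult.assoc)
  also have "\<dots> = (\<Sum>j=1..?q. (if i = j then v j else 0))"
    using Minv_prop[OF i] by (intro sum.cong refl) auto
  also have "\<dots> = v i" using i by (subst sum.delta') simp_all
  finally show ?thesis .
qed


lemma cr_zero: "cr 0 = 0" by (simp add: cr_def vec_eq_iff)
lemma cr_neg: "cr (- c) = - cr c" by (simp add: cr_def vec_eq_iff)

lemma E1_formula:
  fixes c :: "nat \<Rightarrow> int^'d::finite"
  assumes c1: "c 1 = 0" and codd: "\<forall>j\<in>{1..W}. c (2*j+1) = - c (2*j)"
  shows "E1_apply W s1 s eps c dx w u y =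
    (\<Sum>i=1..1+2*W. Kmat s1 s eps 1 i * w i) * u y +
    (\<Sum>m=1..W. (\<Sum>i=1..1+2*W. Kmat s1 s eps (2*m) i * w i) * ((u (y - dx *\<^sub>R cr (c (2*m))) - u (y + dx *\<^sub>R cr (c (2*m))))/2)
       + (\<Sum>i=1..1+2*W. Kmat s1 s eps (2*m+1) i * w i) * ((u (y - dx *\<^sub>R cr (c (2*m))) + u (y + dx *\<^sub>R cr (c (2*m))))/2 - u y))"
proof -
  let ?q = "1+2*W"
  define vK where "vK = (\<lambda>j. \<Sum>i=1..?q. Kmat s1 s eps j i * w i)"
  define z where "z = (\<lambda>k. \<Sum>j=1..?q. Minv ?q k j * vK j)"
  define U where "U = (\<lambda>k. u (y - dx *\<^sub>R cr (c k)))"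
  have Mz': "\<And>i. i \<in> {1..?q} \<Longrightarrow> (\<Sum>k=1..?q. Mmat ?q i k * z k) = vK i"
    unfolding z_def by (rule Mz)
  have r1: "z 1 + (\<Sum>m=1..W. z (2*m) + z (2*m+1)) = vK 1"
    using Mz'[of 1] row_lemma[of 1 W z] by simp
  have r2: "z (2*m) - z (2*m+1) = vK (2*m)" if "m \<in> {1..W}" for m
    using Mz'[of "2*m"] row_lemma[of "2*m" W z] that by simp
  have r3: "z (2*m) + z (2*m+1) = vK (2*m+1)" if "m \<in> {1..W}" for m
    using Mz'[of "2*m+1"] row_lemma[of "2*m+1" W z] that by simp
  have "E1_apply W s1 s eps c dx w u y = (\<Sum>k=1..?q. Mmat ?q 1 k * (\<Sum>j=1..?q. Minv ?q k j * vK j * U k))"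
    unfolding E1_apply_def Let_def vK_def U_def by simp
  also have "\<dots> = (\<Sum>k=1..?q. z k * U k)"
  proof (intro sum.cong refl)
    fix k assume k: "k \<in> {1..?q}"
    then have "Mmat ?q 1 k = 1" by (simp add: Mmat_def)
    then show "Mmat ?q 1 k * (\<Sum>j=1..?q. Minv ?q k j * vK j * U k) = z k * U k"
      unfolding z_def by (simp only: sum_distrib_right mult_1)
  qed
  also have "\<dots> = z 1 * U 1 + (\<Sum>m=1..W. z (2*m) * U (2*m) + z (2*m+1) * U (2*m+1))"
    by (rule split_sum)
  also have "(\<Sum>m=1..W. z (2*m) * U (2*m) + z (2*m+1) * U (2*m+1))
     = (\<Sum>m=1..W. vK (2*m) * ((U (2*m) - U (2*m+1))/2) + vK (2*m+1) * ((U (2*m) + U (2*m+1))/2 - u y)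
                 + (z (2*m) + z (2*m+1)) * u y)"
  proof (intro sum.cong refl)
    fix m assume m: "m \<in> {1..W}"
    show "z (2*m) * U (2*m) + z (2*m+1) * U (2*m+1) = vK (2*m) * ((U (2*m) - U (2*m+1))/2) + vK (2*m+1) * ((U (2*m) + U (2*m+1))/2 - u y)
                 + (z (2*m) + z (2*m+1)) * u y"
      unfolding r2[OF m, symmetric] r3[OF m, symmetric] by (simp add: field_simps)
  qed
  also have "\<dots> = (\<Sum>m=1..W. vK (2*m) * ((U (2*m) - U (2*m+1))/2) + vK (2*m+1) * ((U (2*m) + U (2*m+1))/2 - u y))
                 + (\<Sum>m=1..W. z (2*m) + z (2*m+1)) * u y"
    by (simp only: sum.distrib sum_distrib_right distrib_right)
  finally have "E1_apply W s1 s eps c dx w u y = (z 1 + (\<Sum>m=1..W. z (2*m) + z (2*m+1))) * u y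
     + (\<Sum>m=1..W. vK (2*m) * ((U (2*m) - U (2*m+1))/2) + vK (2*m+1) * ((U (2*m) + U (2*m+1))/2 - u y))"
    using c1 by (simp add: U_def cr_zero algebra_simps)
  also have "\<dots> = vK 1 * u y + (\<Sum>m=1..W. vK (2*m) * ((U (2*m) - U (2*m+1))/2) + vK (2*m+1) * ((U (2*m) + U (2*m+1))/2 - u y))"
    using r1 by simp
  also have "(\<Sum>m=1..W. vK (2*m) * ((U (2*m) - U (2*m+1))/2) + vK (2*m+1) * ((U (2*m) + U (2*m+1))/2 - u y))
     = (\<Sum>m=1..W. vK (2*m) * ((u (y - dx *\<^sub>R cr (c (2*m))) - u (y + dx *\<^sub>R cr (c (2*m))))/2)
       + vK (2*m+1) * ((u (y - dx *\<^sub>R cr (c (2*m))) + u (y + dx *\<^sub>R cr (c (2*m))))/2 - u y))"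
    using codd by (intro sum.cong refl) (simp add: U_def cr_neg)
  finally show ?thesis unfolding vK_def .
qed

lemma Kw:
  assumes j: "j \<in> {1..1+2*W}"
  shows "(\<Sum>i=1..1+2*W. Kmat s1 s eps j i * w i) = w j - svec s1 s j * (w j - eps j * w 1)"
proof -
  have "(\<Sum>i=1..1+2*W. Kmat s1 s eps j i * w i)
      = (\<Sum>i=1..1+2*W. (if j = i then (1 - svec s1 s j) * w j else 0) + (if i = 1 then svec s1 s j * eps j * w 1 else 0))"
    by (intro sum.cong refl) (auto simp: Kmat_def algebra_simps)
  also have "\<dots> = (1 - svec s1 s j) * w j + svec s1 s j * eps j * w 1"
    using j by (simp add: sum.distrib)
  finally show ?thesis by (simp add: algebra_simps)
qed

definition Uv :: "(nat \<Rightarrow> int^'d::finite) \<Rightarrow> nat \<Rightarrow> real \<times> (real^'d)" where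
  "Uv c j = (0, cr (c (2*j)))"

definition wxv :: "nat \<Rightarrow> (nat \<Rightarrow> real) \<Rightarrow> (nat \<Rightarrow> int^'d::finite) \<Rightarrow> real^'d" where
  "wxv W eps c = (\<Sum>j=1..W. eps (2*j) *\<^sub>R cr (c (2*j)))"

definition wCv :: "nat \<Rightarrow> (nat \<Rightarrow> real) \<Rightarrow> (nat \<Rightarrow> int^'d::finite) \<Rightarrow> real \<times> (real^'d)" where
  "wCv W eps c = (0, wxv W eps c)"

lemma wCv_sum: "wCv W eps c = (\<Sum>j=1..W. eps (2*j) *\<^sub>R Uv c j)"
  unfolding wCv_def wxv_def Uv_def by (simp add: prod_eq_iff fst_sum snd_sum)

lemma Aop1_Dd:
  assumes sm: "smooth_fun g"
  shows "Aop1 W eps c g p = Dd (wCv W eps c) g p"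
proof -
  have "Aop1 W eps c g p = (\<Sum>j=1..W. eps (2*j) * Dd (Uv c j) g p)"
    unfolding Aop1_def Uv_def multi1_sum[OF sm] ..
  also have "\<dots> = Dd (wCv W eps c) g p"
    unfolding wCv_sum by (simp add: Dd_sum[OF sm] Dd_scale[OF sm])
  finally show ?thesis .
qed

lemma Aop1_Dd_fun: "smooth_fun g \<Longrightarrow> Aop1 W eps c g = Dd (wCv W eps c) g"
  using Aop1_Dd by blast

lemma Bop2_Dd:
  assumes sm: "smooth_fun g"
  shows "Bop2 W gam c g p = (\<Sum>j=1..W. gam j * (1/2 * Dd (Uv c j) (Dd (Uv c j) g) p))"
  unfolding Bop2_def Uv_def multi2_sum[OF sm] ..

lemma Lf_Dd:
  assumes sm: "smooth_fun f"
  shows "(\<lambda>p. pdt f p + lam * Aop1 W eps c f p) = Dd ((1,0) + lam *\<^sub>R wCv W eps c) f"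
  by (rule ext) (simp add: pdt_Dd Aop1_Dd[OF sm] Dd_add[OF sm] Dd_scale[OF sm])

lemma beta_sum:
  assumes sm: "smooth_fun g"
  shows "(\<Sum>l\<in>UNIV. (\<kappa> * wxv W eps c $ l) * pdx l g p) = Dd (\<kappa> *\<^sub>R wCv W eps c) g p"
proof -
  have "(\<Sum>l\<in>UNIV. (\<kappa> * wxv W eps c $ l) * pdx l g p) = Dd (\<Sum>l\<in>UNIV. (\<kappa> *\<^sub>R wxv W eps c) $ l *\<^sub>R ev l) g p"
    by (simp add: pdx_Dd Dd_sum[OF sm] Dd_scale[OF sm])
  also have "\<dots> = Dd (\<kappa> *\<^sub>R wCv W eps c) g p"
    unfolding sum_axis_real wCv_def by simp
  finally show ?thesis .
qed

lemma B2_add: "smooth_fun f \<Longrightarrow> Dd u (Dd (v + w) f) p = Dd u (Dd v f) p + Dd u (Dd w f) p"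
  by (metis Dd_add schwarz smooth_Dd)
lemma B2_scale: "smooth_fun f \<Longrightarrow> Dd u (Dd (a *\<^sub>R v) f) p = a * Dd u (Dd v f) p"
  by (metis Dd_scale schwarz smooth_Dd)
lemma B2_diff: "smooth_fun f \<Longrightarrow> Dd u (Dd (v - w) f) p = Dd u (Dd v f) p - Dd u (Dd w f) p"
  by (metis Dd_diff schwarz smooth_Dd)
lemma B2_neg: "smooth_fun f \<Longrightarrow> Dd u (Dd (- v) f) p = - Dd u (Dd v f) p"
  by (metis Dd_neg schwarz smooth_Dd)
lemma B2_sum: "smooth_fun f \<Longrightarrow> Dd u (Dd (\<Sum>j\<in>A. v j) f) p = (\<Sum>j\<in>A. Dd u (Dd (v j) f) p)"
proof -
  assume sm: "smooth_fun f"
  have "Dd u (Dd (\<Sum>j\<in>A. v j) f) p = Dd (\<Sum>j\<in>A. v j) (Dd u f) p" by (rule schwarz[OF sm])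
  also have "\<dots> = (\<Sum>j\<in>A. Dd (v j) (Dd u f) p)" by (rule Dd_sum[OF smooth_Dd[OF sm]])
  also have "\<dots> = (\<Sum>j\<in>A. Dd u (Dd (v j) f) p)" using schwarz[OF sm] by (metis)
  finally show ?thesis .
qed

lemma bo_cmult: "f \<in> O[F](g) \<Longrightarrow> (\<lambda>x. c * f x) \<in> O[F](g)"
  by (cases "c = 0") auto
lemma bo_div: "f \<in> O[F](g) \<Longrightarrow> (\<lambda>x. f x / c) \<in> O[F](g)"
  using bo_cmult[of f F g "inverse c"] by (simp add: divide_inverse mult.commute)

lemma alg1:
 fixes s lam dx fp Le Bee LwC BewC BwCwC SB SR1 SR2 R2a Ra Lx :: real
 assumes "s \<noteq> 0" "lam \<noteq> 0" "dx \<noteq> 0"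
 shows "((fp + 2*dx/lam*Le + 2*dx^2/lam^2*Bee + dx*R2a) + (s-2)*(fp + dx/lam*Le + dx^2/(2*lam^2)*Bee + dx*Ra) + (1-s)*fp - s*(-dx*LwC - dx^2/lam*BewC + dx*SR1) + (s-2)*(dx^2/2*SB + dx*SR2)) / (s*(dx/lam))
   - (Le + lam*LwC - lam*dx*(1/s-1/2)*(2*(SB/2) - BwCwC) + dx*((s+2)/(2* s*lam)*(Bee + lam*BewC) + (s-2)/(2* s)*(BewC + lam*BwCwC) + 0*Lx))
   = lam/s*(R2a + (s-2)*Ra - s*SR1 + (s-2)*SR2)"
  using assms by (simp add: field_simps power2_eq_square)

lemma part1:
  fixes f :: "real \<times> (real^'d::finite) \<Rightarrow> real"
  assumes sm: "smooth_fun f" and s0: "s \<noteq> 0" and l0: "lam \<noteq> 0"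
    and Lf: "Lf = (\<lambda>p. pdt f p + lam * Aop1 W eps c f p)"
  shows "(\<lambda>dx. p2_apply lam W s eps c dx f (t, x) / (s * (dx / lam))
           - (pdt f (t, x) + lam * Aop1 W eps c f (t, x)
              - lam * dx * (1/s - 1/2) *
                 (2 * Bop2 W (\<lambda>j. eps (2*j+1)) c f (t, x) - Aop1 W eps c (Aop1 W eps c f) (t, x))
              + dx * ((s+2)/(2* s*lam) * pdt Lf (t, x) + (\<Sum>l\<in>UNIV. ((s-2)/(2* s) * wxv W eps c $ l) * pdx l Lf (t, x)) + 0 * Lf (t, x))))
        \<in> O[at_right 0](\<lambda>dx. dx^2)"
proof -
  define p where "p = (t, x)"
  define e0 :: "real \<times> (real^'d)" where "e0 = (1, 0)"
  define a where "a = (1/lam) *\<^sub>R e0"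
  define wC where "wC = wCv W eps c"
  define aL where "aL = e0 + lam *\<^sub>R wC"
  define U where "U = Uv c"
  define F where "F = (\<lambda>dx v. f (p + dx *\<^sub>R v))"
  define R where "R = (\<lambda>v dx. Rq f p v dx)"
  define \<kappa> where "\<kappa> = (s-2)/(2* s)"
  have smD: "\<And>v. smooth_fun (Dd v f)" by (rule smooth_Dd[OF sm])
  note lin = Dd_add[OF sm] Dd_diff[OF sm] Dd_scale[OF sm] Dd_neg[OF sm]
       Dd_add[OF smD] Dd_diff[OF smD] Dd_scale[OF smD] Dd_neg[OF smD]
       B2_add[OF sm] B2_diff[OF sm] B2_scale[OF sm] B2_neg[OF sm]
  have symU: "\<And>j. Dd (U j) (Dd e0 f) p = Dd e0 (Dd (U j) f) p" by (rule schwarz[OF sm])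
  have symW: "Dd wC (Dd e0 f) p = Dd e0 (Dd wC f) p" by (rule schwarz[OF sm])
  have T1: "pdt f (t, x) = Dd e0 f p" unfolding pdt_Dd e0_def p_def ..
  have T2: "Aop1 W eps c f (t, x) = Dd wC f p" unfolding wC_def p_def by (rule Aop1_Dd[OF sm])
  have T3: "Aop1 W eps c (Aop1 W eps c f) (t, x) = Dd wC (Dd wC f) p"
    unfolding wC_def p_def Aop1_Dd_fun[OF sm] by (rule Aop1_Dd[OF smD])
  have T4: "Bop2 W (\<lambda>j. eps (2*j+1)) c f (t, x) = (\<Sum>j=1..W. eps (2*j+1) * (1/2 * Dd (U j) (Dd (U j) f) p))"
    unfolding U_def p_def by (rule Bop2_Dd[OF sm])
  have LfD: "Lf = Dd aL f" unfolding Lf aL_def e0_def wC_def by (rule Lf_Dd[OF sm])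
  have T5: "pdt Lf (t, x) = Dd e0 (Dd e0 f) p + lam * Dd e0 (Dd wC f) p"
    unfolding LfD pdt_Dd p_def e0_def[symmetric] aL_def by (simp add: lin)
  have T6: "(\<Sum>l\<in>UNIV. ((s-2)/(2* s) * wxv W eps c $ l) * pdx l Lf (t, x)) = \<kappa> * (Dd e0 (Dd wC f) p + lam * Dd wC (Dd wC f) p)"
    unfolding LfD p_def[symmetric] beta_sum[OF smD] \<kappa>_def[symmetric] wC_def[symmetric] aL_def
    by (simp add: lin symW algebra_simps)
  have expF: "F dx v = f p + dx * Dd v f p + dx^2/2 * Dd v (Dd v f) p + dx * R v dx" if "dx \<noteq> 0" for dx v
    unfolding F_def R_def using expand[OF that] .
  have P2: "p2_apply lam W s eps c dx f (t, x) = F dx (2 *\<^sub>R a) + (s-2) * F dx a + (1-s) * f p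
      - s * (\<Sum>j=1..W. eps (2*j) * ((F dx (a - U j) - F dx (a + U j))/2))
      + (s-2) * (\<Sum>j=1..W. eps (2*j+1) * ((F dx (a - U j) + F dx (a + U j))/2 - F dx a))" for dx
    unfolding p2_apply_def Let_def Aop_def Sop_def F_def p_def a_def e0_def U_def Uv_def
    by (simp add: algebra_simps)
  have LW: "Dd wC f p = (\<Sum>j=1..W. eps (2*j) * Dd (U j) f p)"
    unfolding wC_def wCv_sum U_def by (simp add: Dd_sum[OF sm] Dd_scale[OF sm])
  have BW: "Dd e0 (Dd wC f) p = (\<Sum>j=1..W. eps (2*j) * Dd e0 (Dd (U j) f) p)"
    unfolding wC_def wCv_sum U_def by (simp add: B2_sum[OF sm] B2_scale[OF sm])
  define SR1 where "SR1 = (\<lambda>dx. \<Sum>j=1..W. eps (2*j) * ((R (a - U j) dx - R (a + U j) dx)/2))"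
  define SR2 where "SR2 = (\<lambda>dx. \<Sum>j=1..W. eps (2*j+1) * ((R (a - U j) dx + R (a + U j) dx)/2 - R a dx))"
  define SB where "SB = (\<Sum>j=1..W. eps (2*j+1) * Dd (U j) (Dd (U j) f) p)"
  have key: "p2_apply lam W s eps c dx f (t, x) / (s * (dx / lam))
           - (pdt f (t, x) + lam * Aop1 W eps c f (t, x)
              - lam * dx * (1/s - 1/2) *
                 (2 * Bop2 W (\<lambda>j. eps (2*j+1)) c f (t, x) - Aop1 W eps c (Aop1 W eps c f) (t, x))
              + dx * ((s+2)/(2 * s*lam) * pdt Lf (t, x) + (\<Sum>l\<in>UNIV. ((s-2)/(2 * s) * wxv W eps c $ l) * pdx l Lf (t, x)) + 0 * Lf (t, x)))
        = lam/s * (R (2 *\<^sub>R a) dx + (s-2) * R a dx - s * SR1 dx + (s-2) * SR2 dx)" if dx: "dx \<noteq> 0" for dx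
  proof -
    have A: "(F dx (a - U j) - F dx (a + U j))/2 = -dx * Dd (U j) f p - dx^2/lam * Dd e0 (Dd (U j) f) p + dx * ((R (a - U j) dx - R (a + U j) dx)/2)" for j
      unfolding expF[OF dx] using l0 by (simp add: lin a_def symU field_simps power2_eq_square)
    have S: "(F dx (a - U j) + F dx (a + U j))/2 - F dx a = dx^2/2 * Dd (U j) (Dd (U j) f) p + dx * ((R (a - U j) dx + R (a + U j) dx)/2 - R a dx)" for j
      unfolding expF[OF dx] using l0 by (simp add: lin a_def symU field_simps power2_eq_square)
    have F2: "F dx (2 *\<^sub>R a) = f p + 2*dx/lam * Dd e0 f p + 2*dx^2/lam^2 * Dd e0 (Dd e0 f) p + dx * R (2 *\<^sub>R a) dx"
      unfolding expF[OF dx] by (simp add: lin a_def field_simps power2_eq_square)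
    have F1: "F dx a = f p + dx/lam * Dd e0 f p + dx^2/(2*lam^2) * Dd e0 (Dd e0 f) p + dx * R a dx"
      unfolding expF[OF dx] by (simp add: lin a_def field_simps power2_eq_square)
    have SA: "(\<Sum>j=1..W. eps (2*j) * ((F dx (a - U j) - F dx (a + U j))/2)) = -dx * Dd wC f p - dx^2/lam * Dd e0 (Dd wC f) p + dx * SR1 dx"
    proof -
      have "(\<Sum>j=1..W. eps (2*j) * ((F dx (a - U j) - F dx (a + U j))/2))
        = (\<Sum>j=1..W. -dx * (eps (2*j) * Dd (U j) f p) - dx^2/lam * (eps (2*j) * Dd e0 (Dd (U j) f) p) + dx * (eps (2*j) * ((R (a - U j) dx - R (a + U j) dx)/2)))"
        unfolding A by (intro sum.cong refl) (simp add: algebra_simps)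
      also have "\<dots> = -dx * (\<Sum>j=1..W. eps (2*j) * Dd (U j) f p) - dx^2/lam * (\<Sum>j=1..W. eps (2*j) * Dd e0 (Dd (U j) f) p) + dx * SR1 dx"
        unfolding SR1_def by (simp only: sum.distrib sum_subtractf sum_distrib_left)
      finally show ?thesis unfolding LW BW .
    qed
    have SS: "(\<Sum>j=1..W. eps (2*j+1) * ((F dx (a - U j) + F dx (a + U j))/2 - F dx a)) = dx^2/2 * SB + dx * SR2 dx"
    proof -
      have "(\<Sum>j=1..W. eps (2*j+1) * ((F dx (a - U j) + F dx (a + U j))/2 - F dx a))
        = (\<Sum>j=1..W. dx^2/2 * (eps (2*j+1) * Dd (U j) (Dd (U j) f) p) + dx * (eps (2*j+1) * ((R (a - U j) dx + R (a + U j) dx)/2 - R a dx)))"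
        unfolding S by (intro sum.cong refl) (simp add: algebra_simps)
      also have "\<dots> = dx^2/2 * SB + dx * SR2 dx"
        unfolding SR2_def SB_def by (simp only: sum.distrib sum_distrib_left)
      finally show ?thesis .
    qed
    have B4: "Bop2 W (\<lambda>j. eps (2*j+1)) c f (t, x) = SB/2"
      unfolding T4 SB_def by (simp add: sum_divide_distrib)
    show ?thesis
      unfolding P2 SA SS unfolding F2 F1 T1 T2 T3 B4 T5 T6 \<kappa>_def
      by (rule alg1[OF s0 l0 dx])
  qed
  have bo: "(\<lambda>dx. lam/s * (R (2 *\<^sub>R a) dx + (s-2) * R a dx - s * SR1 dx + (s-2) * SR2 dx)) \<in> O[at_right 0](\<lambda>dx. dx^2)"
    unfolding SR1_def SR2_def R_def
    by (intro bo_cmult bo_div sum_in_bigo big_sum_in_bigo taylor[OF sm])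
  have ev: "\<forall>\<^sub>F dx in at_right 0. dx \<noteq> (0::real)"
    using eventually_at_right_less[of "0::real"] by (auto elim: eventually_mono)
  show ?thesis
    using bo by (subst landau_o.big.in_cong[OF eventually_mono[OF ev key]]) auto
qed

lemma alg2:
 fixes lam dx fp Le Bee LwC BewC BwCwC SB SR1 SR2 Ra Lx :: real
 assumes "lam \<noteq> 0" "dx \<noteq> 0"
 shows "((fp + dx/lam*Le + dx^2/(2*lam^2)*Bee + dx*Ra) - (1 * fp + ((- dx*LwC + dx*SR1) + (dx^2/2*SB + dx*SR2)))) / (dx/lam)
   - (Le + lam*LwC - lam*dx/2*(2*(SB/2) - BwCwC) + dx*(1/(2*lam)*(Bee + lam*BewC) + (-1/2)*(BewC + lam*BwCwC) + 0*Lx))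
   = lam*(Ra - SR1 - SR2)"
  using assms by (simp add: field_simps power2_eq_square)

lemma part2:
  fixes f :: "real \<times> (real^'d::finite) \<Rightarrow> real" and c :: "nat \<Rightarrow> int^'d"
  assumes sm: "smooth_fun f" and l0: "lam \<noteq> 0"
    and c1: "c 1 = 0" and codd: "\<forall>j\<in>{1..W}. c (2*j+1) = - c (2*j)"
    and eps1: "eps 1 = 1" and w1: "w 1 = 1" and weven: "\<forall>j\<in>{1..W}. w (2*j) = eps (2*j)"
    and Lf: "Lf = (\<lambda>p. pdt f p + lam * Aop1 W eps c f p)"
  shows "(\<lambda>dx. (f (dx / lam, x) - E1_apply W s1 s eps c dx w (\<lambda>y. f (0, y)) x) / (dx / lam)
           - (pdt f (0, x) + lam * Aop1 W eps c f (0, x)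
              - lam * dx / 2 *
                 (2 * Bop2 W (\<lambda>j. (2 - s) * eps (2*j+1) + (s - 1) * w (2*j+1)) c f (0, x)
                  - Aop1 W eps c (Aop1 W eps c f) (0, x))
              + dx * (1/(2*lam) * pdt Lf (0, x) + (\<Sum>l\<in>UNIV. ((-1/2) * wxv W eps c $ l) * pdx l Lf (0, x)) + 0 * Lf (0, x))))
        \<in> O[at_right 0](\<lambda>dx. dx^2)"
proof -
  define p where "p = (0::real, x)"
  define e0 :: "real \<times> (real^'d)" where "e0 = (1, 0)"
  define a where "a = (1/lam) *\<^sub>R e0"
  define wC where "wC = wCv W eps c"
  define aL where "aL = e0 + lam *\<^sub>R wC"
  define U where "U = Uv c"
  define F where "F = (\<lambda>dx v. f (p + dx *\<^sub>R v))"
  define R where "R = (\<lambda>v dx. Rq f p v dx)"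
  define \<kappa> :: real where "\<kappa> = -1/2"
  define g where "g = (\<lambda>j. (2 - s) * eps (2*j+1) + (s - 1) * w (2*j+1))"
  have smD: "\<And>v. smooth_fun (Dd v f)" by (rule smooth_Dd[OF sm])
  note lin = Dd_add[OF sm] Dd_diff[OF sm] Dd_scale[OF sm] Dd_neg[OF sm]
       Dd_add[OF smD] Dd_diff[OF smD] Dd_scale[OF smD] Dd_neg[OF smD]
       B2_add[OF sm] B2_diff[OF sm] B2_scale[OF sm] B2_neg[OF sm]
  have symW: "Dd wC (Dd e0 f) p = Dd e0 (Dd wC f) p" by (rule schwarz[OF sm])
  have T1: "pdt f (0, x) = Dd e0 f p" unfolding pdt_Dd e0_def p_def ..
  have T2: "Aop1 W eps c f (0, x) = Dd wC f p" unfolding wC_def p_def by (rule Aop1_Dd[OF sm])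
  have T3: "Aop1 W eps c (Aop1 W eps c f) (0, x) = Dd wC (Dd wC f) p"
    unfolding wC_def p_def Aop1_Dd_fun[OF sm] by (rule Aop1_Dd[OF smD])
  have T4: "Bop2 W g c f (0, x) = (\<Sum>j=1..W. g j * (1/2 * Dd (U j) (Dd (U j) f) p))"
    unfolding U_def p_def by (rule Bop2_Dd[OF sm])
  have LfD: "Lf = Dd aL f" unfolding Lf aL_def e0_def wC_def by (rule Lf_Dd[OF sm])
  have T5: "pdt Lf (0, x) = Dd e0 (Dd e0 f) p + lam * Dd e0 (Dd wC f) p"
    unfolding LfD pdt_Dd p_def e0_def[symmetric] aL_def by (simp add: lin)
  have T6: "(\<Sum>l\<in>UNIV. ((-1/2) * wxv W eps c $ l) * pdx l Lf (0, x)) = \<kappa> * (Dd e0 (Dd wC f) p + lam * Dd wC (Dd wC f) p)"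
    unfolding LfD p_def[symmetric] beta_sum[OF smD] \<kappa>_def[symmetric] wC_def[symmetric] aL_def
    by (simp add: lin symW algebra_simps)
  have expF: "F dx v = f p + dx * Dd v f p + dx^2/2 * Dd v (Dd v f) p + dx * R v dx" if "dx \<noteq> 0" for dx v
    unfolding F_def R_def using expand[OF that] .
  have vK1: "(\<Sum>i=1..1+2*W. Kmat s1 s eps 1 i * w i) = 1"
    using Kw[of 1 W s1 s eps w] eps1 w1 by simp
  have vK2: "(\<Sum>i=1..1+2*W. Kmat s1 s eps (2*m) i * w i) = eps (2*m)" if m: "m \<in> {1..W}" for m
    using Kw[of "2*m" W s1 s eps w] m weven w1 by (simp add: svec_def algebra_simps)
  have vK3: "(\<Sum>i=1..1+2*W. Kmat s1 s eps (2*m+1) i * w i) = g m" if m: "m \<in> {1..W}" for m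
    using Kw[of "2*m+1" W s1 s eps w] m w1 by (simp add: svec_def g_def algebra_simps)
  have E1: "E1_apply W s1 s eps c dx w (\<lambda>y. f (0, y)) x = 1 * f p +
     (\<Sum>m=1..W. eps (2*m) * ((F dx (- U m) - F dx (U m))/2) + g m * ((F dx (- U m) + F dx (U m))/2 - f p))" for dx
  proof -
    have "E1_apply W s1 s eps c dx w (\<lambda>y. f (0, y)) x = 1 * f p +
     (\<Sum>m=1..W. (\<Sum>i=1..1+2*W. Kmat s1 s eps (2*m) i * w i) * ((f (0, x - dx *\<^sub>R cr (c (2*m))) - f (0, x + dx *\<^sub>R cr (c (2*m))))/2)
       + (\<Sum>i=1..1+2*W. Kmat s1 s eps (2*m+1) i * w i) * ((f (0, x - dx *\<^sub>R cr (c (2*m))) + f (0, x + dx *\<^sub>R cr (c (2*m))))/2 - f (0, x)))"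
      unfolding E1_formula[OF c1 codd] vK1 p_def by simp
    also have "\<dots> = 1 * f p +
     (\<Sum>m=1..W. eps (2*m) * ((F dx (- U m) - F dx (U m))/2) + g m * ((F dx (- U m) + F dx (U m))/2 - f p))"
      by (intro arg_cong2[where f="(+)"] refl sum.cong)
         (simp_all only: vK2 vK3, simp_all add: F_def U_def Uv_def p_def)
    finally show ?thesis .
  qed
  have LW: "Dd wC f p = (\<Sum>j=1..W. eps (2*j) * Dd (U j) f p)"
    unfolding wC_def wCv_sum U_def by (simp add: Dd_sum[OF sm] Dd_scale[OF sm])
  define SR1 where "SR1 = (\<lambda>dx. \<Sum>j=1..W. eps (2*j) * ((R (- U j) dx - R (U j) dx)/2))"
  define SR2 where "SR2 = (\<lambda>dx. \<Sum>j=1..W. g j * ((R (- U j) dx + R (U j) dx)/2))"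
  define SB where "SB = (\<Sum>j=1..W. g j * Dd (U j) (Dd (U j) f) p)"
  have key: "(f (dx / lam, x) - E1_apply W s1 s eps c dx w (\<lambda>y. f (0, y)) x) / (dx / lam)
           - (pdt f (0, x) + lam * Aop1 W eps c f (0, x)
              - lam * dx / 2 *
                 (2 * Bop2 W (\<lambda>j. (2 - s) * eps (2*j+1) + (s - 1) * w (2*j+1)) c f (0, x)
                  - Aop1 W eps c (Aop1 W eps c f) (0, x))
              + dx * (1/(2*lam) * pdt Lf (0, x) + (\<Sum>l\<in>UNIV. ((-1/2) * wxv W eps c $ l) * pdx l Lf (0, x)) + 0 * Lf (0, x)))
        = lam * (R a dx - SR1 dx - SR2 dx)" if dx: "dx \<noteq> 0" for dx
  proof -
    have A: "(F dx (- U j) - F dx (U j))/2 = -dx * Dd (U j) f p + dx * ((R (- U j) dx - R (U j) dx)/2)" for j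
      unfolding expF[OF dx] by (simp add: lin field_simps power2_eq_square)
    have S: "(F dx (- U j) + F dx (U j))/2 - f p = dx^2/2 * Dd (U j) (Dd (U j) f) p + dx * ((R (- U j) dx + R (U j) dx)/2)" for j
      unfolding expF[OF dx] by (simp add: lin field_simps power2_eq_square)
    have F1: "f (dx / lam, x) = f p + dx/lam * Dd e0 f p + dx^2/(2*lam^2) * Dd e0 (Dd e0 f) p + dx * R a dx"
    proof -
      have "f (dx / lam, x) = F dx a" unfolding F_def p_def a_def e0_def by simp
      also have "\<dots> = f p + dx/lam * Dd e0 f p + dx^2/(2*lam^2) * Dd e0 (Dd e0 f) p + dx * R a dx"
        unfolding expF[OF dx] by (simp add: lin a_def field_simps power2_eq_square)
      finally show ?thesis .
    qed
    have SS: "(\<Sum>m=1..W. eps (2*m) * ((F dx (- U m) - F dx (U m))/2) + g m * ((F dx (- U m) + F dx (U m))/2 - f p))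
       = (- dx * Dd wC f p + dx * SR1 dx) + (dx^2/2 * SB + dx * SR2 dx)"
    proof -
      have "(\<Sum>m=1..W. eps (2*m) * ((F dx (- U m) - F dx (U m))/2) + g m * ((F dx (- U m) + F dx (U m))/2 - f p))
        = (\<Sum>j=1..W. -dx * (eps (2*j) * Dd (U j) f p) + dx * (eps (2*j) * ((R (- U j) dx - R (U j) dx)/2))
              + (dx^2/2 * (g j * Dd (U j) (Dd (U j) f) p) + dx * (g j * ((R (- U j) dx + R (U j) dx)/2))))"
        unfolding A S by (intro sum.cong refl) (simp add: algebra_simps)
      also have "\<dots> = (-dx * (\<Sum>j=1..W. eps (2*j) * Dd (U j) f p) + dx * SR1 dx) + (dx^2/2 * SB + dx * SR2 dx)"
        unfolding SR1_def SR2_def SB_def by (simp only: sum.distrib sum_distrib_left)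
      finally show ?thesis unfolding LW by simp
    qed
    have B4: "Bop2 W (\<lambda>j. (2 - s) * eps (2*j+1) + (s - 1) * w (2*j+1)) c f (0, x) = SB/2"
      unfolding g_def[symmetric] T4 SB_def by (simp add: sum_divide_distrib)
    show ?thesis
      unfolding E1 SS unfolding F1 T1 T2 T3 B4 T5 T6 \<kappa>_def
      by (rule alg2[OF l0 dx])
  qed
  have bo: "(\<lambda>dx. lam * (R a dx - SR1 dx - SR2 dx)) \<in> O[at_right 0](\<lambda>dx. dx^2)"
    unfolding SR1_def SR2_def R_def
    by (intro bo_cmult bo_div sum_in_bigo big_sum_in_bigo taylor[OF sm])
  have ev: "\<forall>\<^sub>F dx in at_right 0. dx \<noteq> (0::real)"
    using eventually_at_right_less[of "0::real"] by (auto elim: eventually_mono)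
  show ?thesis
    using bo by (subst landau_o.big.in_cong[OF eventually_mono[OF ev key]]) auto
qed

theorem proposition11:
  fixes W :: nat and c :: "nat \<Rightarrow> int^'d::finite" and s s1 lam :: real
    and eps w :: "nat \<Rightarrow> real"
  assumes W: "W \<ge> 1"
    and c1: "c 1 = 0"
    and codd: "\<forall>j\<in>{1..W}. c (2*j+1) = - c (2*j)"
    and s: "0 < s" "s \<le> 2"
    and eps1: "eps 1 = 1"
    and lam: "lam > 0"
    and w1: "w 1 = 1"
    and weven: "\<forall>j\<in>{1..W}. w (2*j) = eps (2*j)"
  shows
   "(\<exists>\<alpha> \<gamma> :: real. \<exists>\<beta> :: 'd \<Rightarrow> real. \<forall>f :: real \<times> (real^'d) \<Rightarrow> real. smooth_fun f \<longrightarrow>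
      (let Lf = (\<lambda>p. pdt f p + lam * Aop1 W eps c f p) in
       \<forall>t x. t \<ge> 0 \<longrightarrow>
        (\<lambda>dx. p2_apply lam W s eps c dx f (t, x) / (s * (dx / lam))
           - (pdt f (t, x) + lam * Aop1 W eps c f (t, x)
              - lam * dx * (1/s - 1/2) *
                 (2 * Bop2 W (\<lambda>j. eps (2*j+1)) c f (t, x) - Aop1 W eps c (Aop1 W eps c f) (t, x))
              + dx * (\<alpha> * pdt Lf (t, x) + (\<Sum>l\<in>UNIV. \<beta> l * pdx l Lf (t, x)) + \<gamma> * Lf (t, x))))
        \<in> O[at_right 0](\<lambda>dx. dx^2)))
  \<and> (\<exists>\<alpha> \<gamma> :: real. \<exists>\<beta> :: 'd \<Rightarrow> real. \<forall>f :: real \<times> (real^'d) \<Rightarrow> real. smooth_fun f \<longrightarrow>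
      (let Lf = (\<lambda>p. pdt f p + lam * Aop1 W eps c f p) in
       \<forall>x.
        (\<lambda>dx. (f (dx / lam, x) - E1_apply W s1 s eps c dx w (\<lambda>y. f (0, y)) x) / (dx / lam)
           - (pdt f (0, x) + lam * Aop1 W eps c f (0, x)
              - lam * dx / 2 *
                 (2 * Bop2 W (\<lambda>j. (2 - s) * eps (2*j+1) + (s - 1) * w (2*j+1)) c f (0, x)
                  - Aop1 W eps c (Aop1 W eps c f) (0, x))
              + dx * (\<alpha> * pdt Lf (0, x) + (\<Sum>l\<in>UNIV. \<beta> l * pdx l Lf (0, x)) + \<gamma> * Lf (0, x))))
        \<in> O[at_right 0](\<lambda>dx. dx^2)))"
  proof -
  have s0: "s \<noteq> 0" using s by simp
  have l0: "lam \<noteq> 0" using lam by simp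
  show ?thesis
  proof (rule conjI)
    show "\<exists>\<alpha> \<gamma> :: real. \<exists>\<beta> :: 'd \<Rightarrow> real. \<forall>f :: real \<times> (real^'d) \<Rightarrow> real. smooth_fun f \<longrightarrow>
      (let Lf = (\<lambda>p. pdt f p + lam * Aop1 W eps c f p) in
       \<forall>t x. t \<ge> 0 \<longrightarrow>
        (\<lambda>dx. p2_apply lam W s eps c dx f (t, x) / (s * (dx / lam))
           - (pdt f (t, x) + lam * Aop1 W eps c f (t, x)
              - lam * dx * (1/s - 1/2) *
                 (2 * Bop2 W (\<lambda>j. eps (2*j+1)) c f (t, x) - Aop1 W eps c (Aop1 W eps c f) (t, x))
              + dx * (\<alpha> * pdt Lf (t, x) + (\<Sum>l\<in>UNIV. \<beta> l * pdx l Lf (t, x)) + \<gamma> * Lf (t, x))))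
        \<in> O[at_right 0](\<lambda>dx. dx^2))"
      apply (rule exI[of _ "(s+2)/(2 * s*lam)"], rule exI[of _ 0], rule exI[of _ "\<lambda>l. (s-2)/(2 * s) * wxv W eps c $ l"])
      unfolding Let_def
      apply (intro allI impI)
      apply (rule part1[OF _ s0 l0 refl])
      apply assumption
      done
  next
    show "\<exists>\<alpha> \<gamma> :: real. \<exists>\<beta> :: 'd \<Rightarrow> real. \<forall>f :: real \<times> (real^'d) \<Rightarrow> real. smooth_fun f \<longrightarrow>
      (let Lf = (\<lambda>p. pdt f p + lam * Aop1 W eps c f p) in
       \<forall>x.
        (\<lambda>dx. (f (dx / lam, x) - E1_apply W s1 s eps c dx w (\<lambda>y. f (0, y)) x) / (dx / lam)
           - (pdt f (0, x) + lam * Aop1 W eps c f (0, x)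
              - lam * dx / 2 *
                 (2 * Bop2 W (\<lambda>j. (2 - s) * eps (2*j+1) + (s - 1) * w (2*j+1)) c f (0, x)
                  - Aop1 W eps c (Aop1 W eps c f) (0, x))
              + dx * (\<alpha> * pdt Lf (0, x) + (\<Sum>l\<in>UNIV. \<beta> l * pdx l Lf (0, x)) + \<gamma> * Lf (0, x))))
        \<in> O[at_right 0](\<lambda>dx. dx^2))"
      apply (rule exI[of _ "1/(2*lam)"], rule exI[of _ 0], rule exI[of _ "\<lambda>l. (-1/2) * wxv W eps c $ l"])
      unfolding Let_def
      apply (intro allI impI)
      apply (rule part2[OF _ l0 c1 codd eps1 w1 weven refl])
      apply assumption
      done
  qed
qed

end
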